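(* Let $1\le s<p<\infty$, let $\emptyset\neq A\subseteq L^p(E)$, and let $X$ be the a.s. unique closed random set with $\operatorname{chd}_pA=\operatorname{cl}_p\operatorname{dec}A=L^p(X)$. Then \[ \operatorname{chd}_sA=\operatorname{chd}_0A\cap L^s(E)=L^0(X)\cap L^s(E)=L^s(X), \] and consequently \[ \operatorname{chd}_sA\cap L^p(E)=\operatorname{chd}_0A\cap L^p(E)=\operatorname{chd}_pA . \]
   Context: $E$ is a separable Banach space; $(\Omega,\mathcal F,\mathbb P)$ a complete probability space. $L^0(E)$: a.s.-classes of $E$-valued random variables; $L^q(E)=\{\xi:\mathbb E|\xi|^q<\infty\}$. $\operatorname{cl}_q$: norm closure in $L^q(E)$ ($q\ge1$), closure in probability ($q=0$). $\operatorname{dec}A$: all finite decompositions $\sum_{i=1}^m1_{B_i}\xi_i$, $\xi_i\in A$, $(B_i)$ a measurable partition. A closed random set is a closed-valued Effros measurable multifunction; $L^q(X)=\{\xi\in L^q(E):\xi\in X\text{ a.s.}\}$. For $q\in\{0\}\cup[1,\infty)$ and nonempty $A\subseteq L^q(E)$, $\operatorname{chd}_qA$ is the $q$-Choquet decomposable hull (smallest subset of $L^q(E)$ containing $A$ and the $L^q$-barycenters of all transition kernels $K$ with $K(\omega)$ a Dirac measure in $F_A(\omega)$ a.s., where $\operatorname{cl}_q\operatorname{dec}A=L^q(F_A)$); it satisfies $\operatorname{chd}_qA=\operatorname{cl}_q\operatorname{dec}A$. *)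

theory Defs
  imports "HOL-Probability.Probability"
begin

text \<open>Random variables are represented by functions on the sample space; all sets
below (except dec) are automatically closed under a.s. equality, so they play the
role of sets of a.s.-classes. The exponent q = 0 means convergence in probability.\<close>

definition Lq :: "'w measure \<Rightarrow> real \<Rightarrow> ('w \<Rightarrow> 'e::{banach,second_countable_topology}) set" where
  "Lq M q = (if q = 0 then borel_measurable M
     else {f \<in> borel_measurable M. integrable M (\<lambda>w. norm (f w) powr q)})"

definition closed_random_set :: "'w measure \<Rightarrow> ('w \<Rightarrow> 'e::{banach,second_countable_topology} set) \<Rightarrow> bool" where
  "closed_random_set M X \<longleftrightarrow> (\<forall>w\<in>space M. closed (X w)) \<and>
     (\<forall>G. open G \<longrightarrow> {w \<in> space M. X w \<inter> G \<noteq> {}} \<in> sets M)"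

definition Lq_sel :: "'w measure \<Rightarrow> real \<Rightarrow> ('w \<Rightarrow> 'e::{banach,second_countable_topology} set)
    \<Rightarrow> ('w \<Rightarrow> 'e) set" where
  "Lq_sel M q X = {f \<in> Lq M q. AE w in M. f w \<in> X w}"

definition clq :: "'w measure \<Rightarrow> real \<Rightarrow> ('w \<Rightarrow> 'e::{banach,second_countable_topology}) set
    \<Rightarrow> ('w \<Rightarrow> 'e) set" where
  "clq M q S = (if q = 0 then
      {f \<in> Lq M 0. \<forall>e>0. \<exists>g\<in>S. measure M {w \<in> space M. norm (f w - g w) > e} < e}
    else
      {f \<in> Lq M q. \<forall>e>0. \<exists>g\<in>S. (\<integral>\<^sup>+ w. ennreal (norm (f w - g w) powr q) \<partial>M) < ennreal e})"

definition dec :: "'w measure \<Rightarrow> ('w \<Rightarrow> 'e::{banach,second_countable_topology}) set \<Rightarrow> ('w \<Rightarrow> 'e) set" where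
  "dec M A = {(\<lambda>w. \<Sum>i<m. indicator (B i) w *\<^sub>R \<xi> i w) | (m::nat) B \<xi>.
      (\<forall>i<m. B i \<in> sets M \<and> \<xi> i \<in> A) \<and> disjoint_family_on B {..<m} \<and> (\<Union>i<m. B i) = space M}"

definition chd :: "'w measure \<Rightarrow> real \<Rightarrow> ('w \<Rightarrow> 'e::{banach,second_countable_topology}) set \<Rightarrow> ('w \<Rightarrow> 'e) set" where
  "chd M q A = \<Inter>{S. S \<subseteq> Lq M q \<and> A \<subseteq> S \<and>
     (\<forall>F (K :: 'w \<Rightarrow> 'e measure).
        closed_random_set M F \<and> Lq_sel M q F = clq M q (dec M A) \<and>
        K \<in> M \<rightarrow>\<^sub>M prob_algebra borel \<and>
        (AE w in M. \<exists>x\<in>F w. K w = return borel x) \<and>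
        (\<lambda>w. \<integral>x. x \<partial>(K w)) \<in> Lq M q
        \<longrightarrow> (\<lambda>w. \<integral>x. x \<partial>(K w)) \<in> S)}"

end

theory Submission
  imports Defs
begin

lemma Lq_pos: "q \<noteq> 0 \<Longrightarrow> Lq M q = {f \<in> borel_measurable M. integrable M (\<lambda>w. norm (f w) powr q)}"
  by (simp add: Lq_def)

lemma Lq_meas: "f \<in> Lq M q \<Longrightarrow> f \<in> borel_measurable M"
  by (auto simp: Lq_def split: if_splits)

lemma clq_sub: "clq M q S \<subseteq> Lq M q"
  by (auto simp: clq_def)

lemma (in prob_space) Lq_mono:
  assumes "0 < s" "s \<le> q" shows "Lq M q \<subseteq> Lq M s"
proof
  fix f assume f: "f \<in> Lq M q"
  have q: "q \<noteq> 0" "s \<noteq> 0" using assms by auto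
  have fm: "f \<in> borel_measurable M" using f by (rule Lq_meas)
  have i: "integrable M (\<lambda>w. norm (f w) powr q)" using f q by (simp add: Lq_pos)
  have "integrable M (\<lambda>w. norm (f w) powr s)"
  proof (rule Bochner_Integration.integrable_bound)
    show "integrable M (\<lambda>w. 1 + norm (f w) powr q)" using i by simp
    show "(\<lambda>w. norm (f w) powr s) \<in> borel_measurable M" using fm by measurable
    show "AE w in M. norm (norm (f w) powr s) \<le> norm (1 + norm (f w) powr q)"
    proof (rule AE_I2)
      fix w
      have "norm (f w) powr s \<le> 1 + norm (f w) powr q"
      proof (cases "norm (f w) \<le> 1")
        case True
        then have "norm (f w) powr s \<le> 1"
          using assms powr_mono2[of s "norm (f w)" 1] by simp
        then show ?thesis by (smt (verit) powr_ge_zero)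
      next
        case False
        then have "norm (f w) powr s \<le> norm (f w) powr q"
          using assms by (intro powr_mono) auto
        then show ?thesis by simp
      qed
      then show "norm (norm (f w) powr s) \<le> norm (1 + norm (f w) powr q)" by simp
    qed
  qed
  then show "f \<in> Lq M s" using fm q by (simp add: Lq_pos)
qed

lemma A_clq:
  assumes "\<xi> \<in> A" "\<xi> \<in> Lq M q"
  shows "\<xi> \<in> clq M q (dec M A)"
proof -
  define g where "g = (\<lambda>w. \<Sum>i<(1::nat). indicator ((\<lambda>_. space M) i) w *\<^sub>R (\<lambda>_. \<xi>) i w)"
  have gD: "g \<in> dec M A" unfolding g_def dec_def
    using assms(1) by (intro CollectI exI[of _ "1::nat"] exI[of _ "\<lambda>_. space M"] exI[of _ "\<lambda>_. \<xi>"])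
      (auto simp: disjoint_family_on_def)
  have gv: "\<And>w. w \<in> space M \<Longrightarrow> g w = \<xi> w" by (simp add: g_def)
  show ?thesis
  proof (cases "q = 0")
    case True
    have "\<And>e. e > 0 \<Longrightarrow> measure M {w \<in> space M. norm (\<xi> w - g w) > e} < e"
    proof -
      fix e :: real assume "e > 0"
      have eq: "{w \<in> space M. norm (\<xi> w - g w) > e} = {}" using gv \<open>e > 0\<close> by auto
      show "measure M {w \<in> space M. norm (\<xi> w - g w) > e} < e" using \<open>e > 0\<close> by (simp only: eq measure_empty)
    qed
    then show ?thesis using True assms(2) gD by (auto simp: clq_def)
  next
    case False
    have "\<And>e. e > 0 \<Longrightarrow> (\<integral>\<^sup>+ w. ennreal (norm (\<xi> w - g w) powr q) \<partial>M) < ennreal e"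
    proof -
      fix e :: real assume "e > 0"
      have "(\<integral>\<^sup>+ w. ennreal (norm (\<xi> w - g w) powr q) \<partial>M) = (\<integral>\<^sup>+ w. 0 \<partial>M)"
        by (rule nn_integral_cong) (simp add: gv)
      then show "(\<integral>\<^sup>+ w. ennreal (norm (\<xi> w - g w) powr q) \<partial>M) < ennreal e" using \<open>e > 0\<close> by simp
    qed
    then show ?thesis using False assms(2) gD by (auto simp: clq_def)
  qed
qed

lemma dec_val:
  assumes "g \<in> dec M A"
  obtains m :: nat and B \<xi> where "\<forall>i<m. B i \<in> sets M \<and> \<xi> i \<in> A"
    "g = (\<lambda>w. \<Sum>i<m. indicator (B i) w *\<^sub>R \<xi> i w)"
    "\<And>w. w \<in> space M \<Longrightarrow> \<exists>i<m. w \<in> B i \<and> g w = \<xi> i w"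
proof -
  obtain m :: nat and B \<xi> where g: "g = (\<lambda>w. \<Sum>i<m. indicator (B i) w *\<^sub>R \<xi> i w)"
    and h: "\<forall>i<m. B i \<in> sets M \<and> \<xi> i \<in> A" "disjoint_family_on B {..<m}" "(\<Union>i<m. B i) = space M"
    using assms unfolding dec_def by blast
  have "\<exists>i<m. w \<in> B i \<and> g w = \<xi> i w" if w: "w \<in> space M" for w
  proof -
    obtain i where i: "i < m" "w \<in> B i" using w h(3) by auto
    have "g w = (\<Sum>j\<in>{i}. indicator (B j) w *\<^sub>R \<xi> j w)"
      unfolding g
    proof (rule sum.mono_neutral_right)
      show "\<forall>j\<in>{..<m} - {i}. indicator (B j) w *\<^sub>R \<xi> j w = 0"
        using h(2) i unfolding disjoint_family_on_def by (auto simp: indicator_def)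
    qed (use i in auto)
    then show ?thesis using i by auto
  qed
  then show ?thesis using that g h by blast
qed

lemma bary_return: "(\<lambda>w. \<integral>x. x \<partial>(return borel (f w))) = (f :: 'w \<Rightarrow> 'e::{banach,second_countable_topology})"
  by (rule ext) (simp add: integral_return)

lemma chd_eq:
  fixes A :: "('w \<Rightarrow> 'e::{banach,second_countable_topology}) set"
  assumes crsX: "closed_random_set M X" and eq: "Lq_sel M q X = clq M q (dec M A)" and AL: "A \<subseteq> Lq M q"
  shows "chd M q A = Lq_sel M q X"
proof
  have mem: "Lq_sel M q X \<in> {S. S \<subseteq> Lq M q \<and> A \<subseteq> S \<and>
     (\<forall>F (K :: 'w \<Rightarrow> 'e measure).
        closed_random_set M F \<and> Lq_sel M q F = clq M q (dec M A) \<and>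
        K \<in> M \<rightarrow>\<^sub>M prob_algebra borel \<and>
        (AE w in M. \<exists>x\<in>F w. K w = return borel x) \<and>
        (\<lambda>w. \<integral>x. x \<partial>(K w)) \<in> Lq M q
        \<longrightarrow> (\<lambda>w. \<integral>x. x \<partial>(K w)) \<in> Lq_sel M q X)}"
  proof (intro CollectI conjI allI impI)
    show "Lq_sel M q X \<subseteq> Lq M q" by (auto simp: Lq_sel_def)
    show "A \<subseteq> Lq_sel M q X" using AL A_clq eq by blast
    fix F and K :: "'w \<Rightarrow> 'e measure"
    assume h: "closed_random_set M F \<and> Lq_sel M q F = clq M q (dec M A) \<and>
        K \<in> M \<rightarrow>\<^sub>M prob_algebra borel \<and>
        (AE w in M. \<exists>x\<in>F w. K w = return borel x) \<and>
        (\<lambda>w. \<integral>x. x \<partial>(K w)) \<in> Lq M q"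
    have hA: "AE w in M. \<exists>x\<in>F w. K w = return borel x" using h by blast
    have "AE w in M. (\<integral>x. x \<partial>(K w)) \<in> F w"
      using hA by eventually_elim (auto simp: integral_return)
    moreover have "(\<lambda>w. \<integral>x. x \<partial>(K w)) \<in> Lq M q" using h by blast
    ultimately have "(\<lambda>w. \<integral>x. x \<partial>(K w)) \<in> Lq_sel M q F" unfolding Lq_sel_def by blast
    then show "(\<lambda>w. \<integral>x. x \<partial>(K w)) \<in> Lq_sel M q X" using h eq by simp
  qed
  show "chd M q A \<subseteq> Lq_sel M q X"
    unfolding chd_def using mem by blast
  show "Lq_sel M q X \<subseteq> chd M q A"
  proof
    fix f assume f: "f \<in> Lq_sel M q X"
    then have fm: "f \<in> M \<rightarrow>\<^sub>M borel" and fL: "f \<in> Lq M q" and fX: "AE w in M. f w \<in> X w"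
      by (auto simp: Lq_sel_def intro: Lq_meas)
    have K: "(\<lambda>w. return borel (f w)) \<in> M \<rightarrow>\<^sub>M prob_algebra borel"
      by (rule measurable_compose[OF fm measurable_return_prob_space])
    have KX: "AE w in M. \<exists>x\<in>X w. return borel (f w) = return borel x"
      using fX by eventually_elim auto
    show "f \<in> chd M q A"
      unfolding chd_def
    proof (rule InterI)
      fix S assume "S \<in> {S. S \<subseteq> Lq M q \<and> A \<subseteq> S \<and>
     (\<forall>F (K :: 'w \<Rightarrow> 'e measure).
        closed_random_set M F \<and> Lq_sel M q F = clq M q (dec M A) \<and>
        K \<in> M \<rightarrow>\<^sub>M prob_algebra borel \<and>
        (AE w in M. \<exists>x\<in>F w. K w = return borel x) \<and>
        (\<lambda>w. \<integral>x. x \<partial>(K w)) \<in> Lq M q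
        \<longrightarrow> (\<lambda>w. \<integral>x. x \<partial>(K w)) \<in> S)}"
      then have Sc: "\<And>F (K :: 'w \<Rightarrow> 'e measure).
        closed_random_set M F \<and> Lq_sel M q F = clq M q (dec M A) \<and>
        K \<in> M \<rightarrow>\<^sub>M prob_algebra borel \<and>
        (AE w in M. \<exists>x\<in>F w. K w = return borel x) \<and>
        (\<lambda>w. \<integral>x. x \<partial>(K w)) \<in> Lq M q
        \<Longrightarrow> (\<lambda>w. \<integral>x. x \<partial>(K w)) \<in> S" by blast
      have "(\<lambda>w. \<integral>x. x \<partial>(return borel (f w))) \<in> S"
        by (rule Sc[of X "\<lambda>w. return borel (f w)"]) (simp add: crsX eq K KX bary_return fL)
      then show "f \<in> S" by (simp add: bary_return)
    qed
  qed
qed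

lemma powr_sum_le:
  fixes a b s :: real assumes "0 \<le> a" "0 \<le> b" "0 < s"
  shows "(a + b) powr s \<le> 2 powr s * (a powr s + b powr s)"
proof -
  have "(a + b) powr s \<le> (2 * max a b) powr s"
    using assms by (intro powr_mono2) auto
  also have "\<dots> = 2 powr s * (max a b) powr s"
    using assms by (simp add: powr_mult)
  also have "(max a b) powr s \<le> a powr s + b powr s"
    by (cases "a \<le> b") (auto simp: max_def)
  then have "2 powr s * (max a b) powr s \<le> 2 powr s * (a powr s + b powr s)"
    by (intro mult_left_mono) auto
  finally show ?thesis .
qed

lemma norm_tri_powr:
  fixes x y z :: "'a::real_normed_vector" and s :: real assumes "0 < s"
  shows "norm (x - y) powr s \<le> 2 powr s * (norm (x - z) powr s + norm (z - y) powr s)"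
proof -
  have "norm (x - y) \<le> norm (x - z) + norm (z - y)" using norm_triangle_ineq[of "x - z" "z - y"] by simp
  then have "norm (x - y) powr s \<le> (norm (x - z) + norm (z - y)) powr s"
    using assms by (intro powr_mono2) auto
  also have "\<dots> \<le> 2 powr s * (norm (x - z) powr s + norm (z - y) powr s)"
    using assms by (intro powr_sum_le) auto
  finally show ?thesis .
qed

lemma powr_split:
  fixes u \<delta> s p :: real assumes "0 \<le> u" "0 < \<delta>" "0 < s" "s \<le> p"
  shows "u powr s \<le> \<delta> powr s + \<delta> powr (s - p) * u powr p"
proof (cases "u \<le> \<delta>")
  case True
  then have "u powr s \<le> \<delta> powr s" using assms by (intro powr_mono2) auto
  then show ?thesis by (smt (verit) mult_nonneg_nonneg powr_ge_zero)
next
  case False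
  then have u0: "u > 0" using assms by auto
  have "u powr s = u powr p * u powr (s - p)" using u0 by (simp add: powr_add[symmetric])
  also have "\<dots> \<le> u powr p * \<delta> powr (s - p)"
    using False assms by (intro mult_left_mono powr_mono2') auto
  finally show ?thesis by (smt (verit) powr_ge_zero mult.commute)
qed

locale thm13 = prob_space M for M :: "'w measure" +
  fixes A :: "('w \<Rightarrow> 'e::{banach,second_countable_topology}) set" and X :: "'w \<Rightarrow> 'e set" and p :: real
  assumes p0: "0 < p" and Ane: "A \<noteq> {}" and ALp: "A \<subseteq> Lq M p"
    and crs: "closed_random_set M X" and eqp: "clq M p (dec M A) = Lq_sel M p X"
begin

lemma A_sel: "\<xi> \<in> A \<Longrightarrow> \<xi> \<in> borel_measurable M \<and> (AE w in M. \<xi> w \<in> X w)"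
proof -
  assume a: "\<xi> \<in> A"
  then have "\<xi> \<in> clq M p (dec M A)" using ALp by (intro A_clq) auto
  then have "\<xi> \<in> Lq_sel M p X" using eqp by simp
  then show ?thesis by (auto simp: Lq_sel_def intro: Lq_meas)
qed

lemma D_sel:
  assumes "g \<in> dec M A" shows "g \<in> borel_measurable M \<and> (AE w in M. g w \<in> X w)"
proof -
  obtain m :: nat and B \<xi> where h1: "\<forall>i<m. B i \<in> sets M \<and> \<xi> i \<in> A"
    and h2: "g = (\<lambda>w. \<Sum>i<m. indicator (B i) w *\<^sub>R \<xi> i w)"
    and h3: "\<And>w. w \<in> space M \<Longrightarrow> \<exists>i<m. w \<in> B i \<and> g w = \<xi> i w"
    by (rule dec_val[OF assms]) iprover
  have xm: "\<xi> i \<in> borel_measurable M" if "i < m" for i using h1 that A_sel by blast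
  have bm: "B i \<in> sets M" if "i < m" for i using h1 that by blast
  have "(\<lambda>w. \<Sum>i<m. indicator (B i) w *\<^sub>R \<xi> i w) \<in> borel_measurable M"
  proof (rule borel_measurable_sum)
    fix i assume "i \<in> {..<m}"
    then have "i < m" by simp
    show "(\<lambda>w. indicator (B i) w *\<^sub>R \<xi> i w) \<in> borel_measurable M"
      by (rule borel_measurable_scaleR[OF borel_measurable_indicator[OF bm[OF \<open>i < m\<close>]] xm[OF \<open>i < m\<close>]])
  qed
  moreover have "\<forall>i\<in>{..<m}. AE w in M. \<xi> i w \<in> X w"
  proof
    fix i assume "i \<in> {..<m}"
    then have "\<xi> i \<in> A" using h1 by blast
    then show "AE w in M. \<xi> i w \<in> X w" using A_sel by blast
  qed
  then have "AE w in M. \<forall>i\<in>{..<m}. \<xi> i w \<in> X w"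
    by (subst AE_finite_all) auto
  then have "AE w in M. g w \<in> X w"
  proof (rule AE_mp[OF _ AE_I2], intro impI)
    fix w assume w: "w \<in> space M" and a: "\<forall>i\<in>{..<m}. \<xi> i w \<in> X w"
    obtain i where "i < m" "g w = \<xi> i w" using h3[OF w] by blast
    then show "g w \<in> X w" using a by simp
  qed
  ultimately show ?thesis using h2 by simp
qed

lemma closed_approx:
  assumes fm: "f \<in> borel_measurable M"
  and ap: "\<And>\<delta> \<epsilon>. \<delta> > 0 \<Longrightarrow> \<epsilon> > 0 \<Longrightarrow> \<exists>g. g \<in> borel_measurable M \<and> (AE w in M. g w \<in> X w)
      \<and> measure M {w\<in>space M. \<delta> \<le> norm (f w - g w)} < \<epsilon>"
  shows "AE w in M. f w \<in> X w"
proof -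
  define P where "P = (\<lambda>k n g. g \<in> borel_measurable M \<and> (AE w in M. g w \<in> X w)
      \<and> measure M {w\<in>space M. 1 / real (Suc k) \<le> norm (f w - g w)} < 1 / real (Suc n))"
  define G where "G k n = (SOME g. P k n g)" for k n
  have PG: "P k n (G k n)" for k n
  proof -
    have ex: "\<exists>g. P k n g" using ap[of "1 / real (Suc k)" "1 / real (Suc n)"] by (simp add: P_def)
    show ?thesis unfolding G_def by (rule someI_ex[OF ex])
  qed
  have Gm[measurable]: "G k n \<in> borel_measurable M" for k n using PG by (simp add: P_def)
  define C where "C k = {w\<in>space M. \<forall>n. 1 / real (Suc k) \<le> norm (f w - G k n w)}" for k
  note fm[measurable]
  have Cs: "C k \<in> sets M" for k unfolding C_def by measurable
  have C0: "measure M (C k) = 0" for k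
  proof (rule ccontr)
    assume "measure M (C k) \<noteq> 0"
    then have pos: "measure M (C k) > 0" using measure_nonneg[of M "C k"] by linarith
    obtain n where n: "inverse (real (Suc n)) < measure M (C k)" using reals_Archimedean[OF pos] by blast
    have "measure M (C k) \<le> measure M {w\<in>space M. 1 / real (Suc k) \<le> norm (f w - G k n w)}"
      by (rule finite_measure_mono) (auto simp: C_def)
    also have "\<dots> < 1 / real (Suc n)" using PG[of k n] by (simp add: P_def)
    finally show False using n by (simp add: inverse_eq_divide)
  qed
  have "C k \<in> null_sets M" for k using Cs C0 by (simp add: null_sets_def emeasure_eq_measure)
  then have AC: "AE w in M. \<forall>k. w \<notin> C k"
    by (subst AE_all_countable) (auto intro: AE_not_in)
  have AG: "AE w in M. \<forall>k. \<forall>n. G k n w \<in> X w"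
    using PG by (subst AE_all_countable, intro allI, subst AE_all_countable) (auto simp: P_def)
  show ?thesis
  proof (rule AE_mp[OF AE_conj_iff[THEN iffD2, OF conjI[OF AC AG]] AE_I2], intro impI)
    fix w assume w: "w \<in> space M" and h: "(\<forall>k. w \<notin> C k) \<and> (\<forall>k n. G k n w \<in> X w)"
    show "f w \<in> X w"
    proof (rule ccontr)
      assume nf: "f w \<notin> X w"
      have "closed (X w)" using crs w by (simp add: closed_random_set_def)
      then have "open (- X w)" by auto
      then obtain \<delta> where d: "\<delta> > 0" "ball (f w) \<delta> \<subseteq> - X w"
        using nf open_contains_ball by blast
      obtain k where k: "inverse (real (Suc k)) < \<delta>" using reals_Archimedean[OF d(1)] by blast
      from h w have "w \<notin> C k" by blast
      then obtain n where "norm (f w - G k n w) < 1 / real (Suc k)" using w by (auto simp: C_def not_le)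
      then have "G k n w \<in> ball (f w) \<delta>" using k by (simp add: dist_norm inverse_eq_divide)
      moreover have "G k n w \<in> X w" using h by simp
      ultimately show False using d(2) by (auto simp del: mem_ball)
    qed
  qed
qed

lemma trunc:
  assumes fm: "f \<in> borel_measurable M" and fX: "AE w in M. f w \<in> X w" and g0: "g0 \<in> A"
  shows "(\<lambda>w. if norm (f w) \<le> r then f w else g0 w) \<in> Lq_sel M p X"
proof -
  have g0m[measurable]: "g0 \<in> borel_measurable M" and g0X: "AE w in M. g0 w \<in> X w" using A_sel[OF g0] by auto
  have g0i: "integrable M (\<lambda>w. norm (g0 w) powr p)" using ALp g0 p0 by (auto simp: Lq_pos)
  note fm[measurable]
  have hm: "(\<lambda>w. if norm (f w) \<le> r then f w else g0 w) \<in> borel_measurable M" by measurable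
  have "integrable M (\<lambda>w. norm (if norm (f w) \<le> r then f w else g0 w) powr p)"
  proof (rule Bochner_Integration.integrable_bound)
    show "integrable M (\<lambda>w. \<bar>r\<bar> powr p + norm (g0 w) powr p)" using g0i by simp
    show "(\<lambda>w. norm (if norm (f w) \<le> r then f w else g0 w) powr p) \<in> borel_measurable M" using hm by measurable
    show "AE w in M. norm (norm (if norm (f w) \<le> r then f w else g0 w) powr p) \<le> norm (\<bar>r\<bar> powr p + norm (g0 w) powr p)"
    proof (rule AE_I2)
      fix w
      have "norm (if norm (f w) \<le> r then f w else g0 w) powr p \<le> \<bar>r\<bar> powr p + norm (g0 w) powr p"
      proof (cases "norm (f w) \<le> r")
        case True
        then have "norm (f w) powr p \<le> \<bar>r\<bar> powr p" using p0 by (intro powr_mono2) auto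
        then show ?thesis using True by (simp add: add_increasing2)
      qed simp
      then show "norm (norm (if norm (f w) \<le> r then f w else g0 w) powr p) \<le> norm (\<bar>r\<bar> powr p + norm (g0 w) powr p)"
        by simp
    qed
  qed
  moreover have "AE w in M. (if norm (f w) \<le> r then f w else g0 w) \<in> X w"
    using fX g0X by eventually_elim auto
  ultimately show ?thesis using hm p0 by (simp add: Lq_sel_def Lq_pos)
qed

lemma markov:
  fixes u v :: "'w \<Rightarrow> 'e"
  assumes um[measurable]: "u \<in> borel_measurable M" and vm[measurable]: "v \<in> borel_measurable M"
    and d: "0 < \<delta>" and s: "0 < s"
    and lt: "(\<integral>\<^sup>+ w. ennreal (norm (u w - v w) powr s) \<partial>M) < ennreal (\<epsilon> * \<delta> powr s)"
  shows "measure M {w\<in>space M. \<delta> \<le> norm (u w - v w)} < \<epsilon>"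
proof -
  define S where "S = {w\<in>space M. \<delta> \<le> norm (u w - v w)}"
  have Ss: "S \<in> sets M" unfolding S_def by measurable
  have "ennreal (\<delta> powr s) * emeasure M S = (\<integral>\<^sup>+ w. ennreal (\<delta> powr s) * indicator S w \<partial>M)"
    using Ss by (simp add: nn_integral_cmult_indicator)
  also have "\<dots> \<le> (\<integral>\<^sup>+ w. ennreal (norm (u w - v w) powr s) \<partial>M)"
  proof (rule nn_integral_mono)
    fix w assume "w \<in> space M"
    show "ennreal (\<delta> powr s) * indicator S w \<le> ennreal (norm (u w - v w) powr s)"
    proof (cases "w \<in> S")
      case True
      then have "\<delta> powr s \<le> norm (u w - v w) powr s" using d s by (intro powr_mono2) (auto simp: S_def)
      then show ?thesis using True by simp
    qed simp
  qed
  also have "\<dots> < ennreal (\<epsilon> * \<delta> powr s)" by (rule lt)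
  finally have "ennreal (\<delta> powr s * measure M S) < ennreal (\<epsilon> * \<delta> powr s)"
    by (simp add: emeasure_eq_measure ennreal_mult)
  then have "\<delta> powr s * measure M S < \<epsilon> * \<delta> powr s"
    by (subst (asm) ennreal_less_iff) auto
  then show ?thesis unfolding S_def using d by (simp add: mult.commute)
qed

lemma tail:
  assumes fm[measurable]: "f \<in> borel_measurable M" and e: "0 < \<epsilon>"
  shows "\<exists>n::nat. measure M {w\<in>space M. real n < norm (f w)} < \<epsilon>"
proof -
  define T where "T n = {w\<in>space M. real n < norm (f w)}" for n :: nat
  have "range T \<subseteq> sets M" unfolding T_def by auto
  moreover have "decseq T" unfolding T_def decseq_def by auto
  ultimately have lim: "(\<lambda>n. measure M (T n)) \<longlonglongrightarrow> measure M (\<Inter>i. T i)"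
    by (rule finite_Lim_measure_decseq)
  have "(\<Inter>i. T i) = {}"
  proof -
    have "w \<notin> T (nat \<lceil>norm (f w)\<rceil>)" for w unfolding T_def by (simp add: not_less)
    then show ?thesis by blast
  qed
  then have "(\<lambda>n. measure M (T n)) \<longlonglongrightarrow> 0" using lim by simp
  then have "eventually (\<lambda>n. measure M (T n) < \<epsilon>) sequentially" using e by (rule order_tendstoD(2))
  then obtain n where "measure M (T n) < \<epsilon>" by (auto simp: eventually_sequentially)
  then show ?thesis unfolding T_def by blast
qed

lemma clq0_sub: "clq M 0 (dec M A) \<subseteq> Lq_sel M 0 X"
proof
  fix f assume f: "f \<in> clq M 0 (dec M A)"
  then have fm[measurable]: "f \<in> borel_measurable M" and ap: "\<And>e. e > 0 \<Longrightarrow> \<exists>g\<in>dec M A. measure M {w \<in> space M. norm (f w - g w) > e} < e"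
    by (auto simp: clq_def Lq_def)
  have "AE w in M. f w \<in> X w"
  proof (rule closed_approx[OF fm])
    fix \<delta> \<epsilon> :: real assume d: "\<delta> > 0" and e: "\<epsilon> > 0"
    define e' where "e' = min (\<delta> / 2) \<epsilon>"
    have e': "e' > 0" "e' < \<delta>" "e' \<le> \<epsilon>" using d e by (auto simp: e'_def)
    obtain g where g: "g \<in> dec M A" "measure M {w \<in> space M. norm (f w - g w) > e'} < e'" using ap[OF e'(1)] by blast
    have gm[measurable]: "g \<in> borel_measurable M" and gX: "AE w in M. g w \<in> X w" using D_sel[OF g(1)] by auto
    have "measure M {w\<in>space M. \<delta> \<le> norm (f w - g w)} \<le> measure M {w \<in> space M. norm (f w - g w) > e'}"
      using e' by (intro finite_measure_mono) auto
    then have "measure M {w\<in>space M. \<delta> \<le> norm (f w - g w)} < \<epsilon>" using g(2) e' by linarith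
    then show "\<exists>g. g \<in> borel_measurable M \<and> (AE w in M. g w \<in> X w) \<and> measure M {w\<in>space M. \<delta> \<le> norm (f w - g w)} < \<epsilon>"
      using gm gX by blast
  qed
  then show "f \<in> Lq_sel M 0 X" using fm by (simp add: Lq_sel_def Lq_def)
qed

lemma clqs_sub: assumes s: "0 < s" shows "clq M s (dec M A) \<subseteq> Lq_sel M s X"
proof
  fix f assume f: "f \<in> clq M s (dec M A)"
  then have fL: "f \<in> Lq M s" and ap: "\<And>e. e > 0 \<Longrightarrow> \<exists>g\<in>dec M A. (\<integral>\<^sup>+ w. ennreal (norm (f w - g w) powr s) \<partial>M) < ennreal e"
    using s by (auto simp: clq_def)
  have fm[measurable]: "f \<in> borel_measurable M" using fL by (rule Lq_meas)
  have "AE w in M. f w \<in> X w"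
  proof (rule closed_approx[OF fm])
    fix \<delta> \<epsilon> :: real assume d: "\<delta> > 0" and e: "\<epsilon> > 0"
    obtain g where g: "g \<in> dec M A" "(\<integral>\<^sup>+ w. ennreal (norm (f w - g w) powr s) \<partial>M) < ennreal (\<epsilon> * \<delta> powr s)"
      using ap[of "\<epsilon> * \<delta> powr s"] d e by auto
    have gm[measurable]: "g \<in> borel_measurable M" and gX: "AE w in M. g w \<in> X w" using D_sel[OF g(1)] by auto
    have "measure M {w\<in>space M. \<delta> \<le> norm (f w - g w)} < \<epsilon>"
      by (rule markov[OF fm gm d s g(2)])
    then show "\<exists>g. g \<in> borel_measurable M \<and> (AE w in M. g w \<in> X w) \<and> measure M {w\<in>space M. \<delta> \<le> norm (f w - g w)} < \<epsilon>"
      using gm gX by blast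
  qed
  then show "f \<in> Lq_sel M s X" using fL by (simp add: Lq_sel_def)
qed

lemma sel0_sub: "Lq_sel M 0 X \<subseteq> clq M 0 (dec M A)"
proof
  fix f assume f: "f \<in> Lq_sel M 0 X"
  then have fm[measurable]: "f \<in> borel_measurable M" and fX: "AE w in M. f w \<in> X w"
    by (auto simp: Lq_sel_def Lq_def)
  obtain g0 where g0: "g0 \<in> A" using Ane by blast
  have g0m[measurable]: "g0 \<in> borel_measurable M" using A_sel[OF g0] by auto
  have "\<exists>g\<in>dec M A. measure M {w \<in> space M. norm (f w - g w) > e} < e" if e: "e > 0" for e
  proof -
    obtain n :: nat where tn: "measure M {w\<in>space M. real n < norm (f w)} < e / 2"
      using tail[OF fm, of "e / 2"] e by auto
    define fn where "fn = (\<lambda>w. if norm (f w) \<le> real n then f w else g0 w)"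
    have fnm[measurable]: "fn \<in> borel_measurable M" unfolding fn_def by measurable
    have "fn \<in> clq M p (dec M A)" unfolding eqp fn_def by (rule trunc[OF fm fX g0])
    then have apn: "\<forall>e>0. \<exists>g\<in>dec M A. (\<integral>\<^sup>+ w. ennreal (norm (fn w - g w) powr p) \<partial>M) < ennreal e"
      using p0 unfolding clq_def by auto
    have pos: "e / 2 * e powr p > 0" using e by simp
    obtain h where h: "h \<in> dec M A"
      "(\<integral>\<^sup>+ w. ennreal (norm (fn w - h w) powr p) \<partial>M) < ennreal (e / 2 * e powr p)"
      using apn pos by blast
    have hm[measurable]: "h \<in> borel_measurable M" using D_sel[OF h(1)] by auto
    have m2: "measure M {w\<in>space M. e \<le> norm (fn w - h w)} < e / 2"
      by (rule markov[OF fnm hm e p0 h(2)])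
    have "measure M {w \<in> space M. norm (f w - h w) > e}
       \<le> measure M ({w\<in>space M. real n < norm (f w)} \<union> {w\<in>space M. e \<le> norm (fn w - h w)})"
      by (intro finite_measure_mono) (auto simp: fn_def split: if_splits)
    also have "\<dots> \<le> measure M {w\<in>space M. real n < norm (f w)} + measure M {w\<in>space M. e \<le> norm (fn w - h w)}"
      by (intro measure_subadditive) auto
    finally show ?thesis using tn m2 h(1) by (intro bexI[of _ h]) auto
  qed
  then show "f \<in> clq M 0 (dec M A)" using fm by (simp add: clq_def Lq_def)
qed

lemma sels_sub: assumes s: "0 < s" "s \<le> p" shows "Lq_sel M s X \<subseteq> clq M s (dec M A)"
proof
  fix f assume f: "f \<in> Lq_sel M s X"
  then have fL: "f \<in> Lq M s" and fX: "AE w in M. f w \<in> X w"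
    by (auto simp: Lq_sel_def)
  have fm[measurable]: "f \<in> borel_measurable M" using fL by (rule Lq_meas)
  have fi: "integrable M (\<lambda>w. norm (f w) powr s)" using fL s by (simp add: Lq_pos)
  obtain g0 where g0: "g0 \<in> A" using Ane by blast
  have g0m[measurable]: "g0 \<in> borel_measurable M" using A_sel[OF g0] by auto
  have "g0 \<in> Lq M s" using g0 ALp Lq_mono[OF s] by blast
  then have g0i: "integrable M (\<lambda>w. norm (g0 w) powr s)" using s by (simp add: Lq_pos)
  define \<phi> where "\<phi> w = 2 powr s * (norm (f w) powr s + norm (g0 w) powr s)" for w
  have \<phi>i: "integrable M \<phi>" unfolding \<phi>_def using fi g0i by simp
  define fn where "fn n = (\<lambda>w. if norm (f w) \<le> real n then f w else g0 w)" for n :: nat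
  have fnm[measurable]: "fn n \<in> borel_measurable M" for n unfolding fn_def by measurable
  define \<psi> where "\<psi> n w = norm (f w - fn n w) powr s" for n w
  have \<psi>m[measurable]: "\<psi> n \<in> borel_measurable M" for n unfolding \<psi>_def by measurable
  have \<psi>b: "norm (\<psi> n w) \<le> \<phi> w" for n w
  proof (cases "norm (f w) \<le> real n")
    case True
    have "0 \<le> \<phi> w" by (simp add: \<phi>_def)
    then show ?thesis using True s by (simp add: \<psi>_def fn_def)
  next
    case False
    have "\<psi> n w \<le> 2 powr s * (norm (f w - 0) powr s + norm (0 - g0 w) powr s)"
      unfolding \<psi>_def fn_def using False s by (simp only: if_False) (intro norm_tri_powr)
    then show ?thesis unfolding \<psi>_def by (simp add: \<phi>_def)
  qed
  have \<psi>lim: "(\<lambda>n. \<psi> n w) \<longlonglongrightarrow> 0" for w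
  proof (rule tendsto_eventually)
    show "eventually (\<lambda>n. \<psi> n w = 0) sequentially"
      unfolding eventually_sequentially
    proof (intro exI allI impI)
      fix n assume "nat \<lceil>norm (f w)\<rceil> \<le> n"
      then have "norm (f w) \<le> real n" by linarith
      then show "\<psi> n w = 0" using s by (simp add: \<psi>_def fn_def)
    qed
  qed
  have \<psi>i: "integrable M (\<psi> n)" for n
    by (rule integrable_dominated_convergence2[where f="\<lambda>_. 0::real" and w=\<phi>]) (use \<phi>i \<psi>lim \<psi>b in auto)
  have \<psi>int: "(\<lambda>n. integral\<^sup>L M (\<psi> n)) \<longlonglongrightarrow> integral\<^sup>L M (\<lambda>_. 0::real)"
    by (rule integral_dominated_convergence[where w=\<phi>]) (use \<phi>i \<psi>lim \<psi>b in auto)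
  have "\<exists>g\<in>dec M A. (\<integral>\<^sup>+ w. ennreal (norm (f w - g w) powr s) \<partial>M) < ennreal \<epsilon>" if e: "\<epsilon> > 0" for \<epsilon>
  proof -
    define c where "c = \<epsilon> / (3 * 2 powr s)"
    have c: "c > 0" using e by (simp add: c_def)
    have "eventually (\<lambda>n. integral\<^sup>L M (\<psi> n) < c) sequentially"
      using \<psi>int c by (intro order_tendstoD(2)) auto
    then obtain n where n: "integral\<^sup>L M (\<psi> n) < c" by (auto simp: eventually_sequentially)
    define \<delta> where "\<delta> = c powr (1 / s)"
    have d: "\<delta> > 0" using c by (simp add: \<delta>_def)
    have ds: "\<delta> powr s = c" using c s by (simp add: \<delta>_def powr_powr)
    define \<eta> where "\<eta> = c / \<delta> powr (s - p)"
    have eta: "\<eta> > 0" using c d by (simp add: \<eta>_def)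
    have "fn n \<in> clq M p (dec M A)" unfolding eqp fn_def by (rule trunc[OF fm fX g0])
    then obtain h where h: "h \<in> dec M A"
      "(\<integral>\<^sup>+ w. ennreal (norm (fn n w - h w) powr p) \<partial>M) < ennreal \<eta>"
      using p0 eta unfolding clq_def by auto
    have hm[measurable]: "h \<in> borel_measurable M" using D_sel[OF h(1)] by auto
    define q where "q w = norm (fn n w - h w) powr p" for w
    have qm[measurable]: "q \<in> borel_measurable M" unfolding q_def by measurable
    have qi: "integrable M q"
    proof (subst integrable_iff_bounded, intro conjI)
      show "q \<in> borel_measurable M" by (rule qm)
      have "(\<integral>\<^sup>+ w. ennreal (norm (q w)) \<partial>M) = (\<integral>\<^sup>+ w. ennreal (norm (fn n w - h w) powr p) \<partial>M)"
        by (simp add: q_def)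
      also have "\<dots> < \<infinity>" by (rule order.strict_trans[OF h(2)]) simp
      finally show "(\<integral>\<^sup>+ w. ennreal (norm (q w)) \<partial>M) < \<infinity>" .
    qed
    have "ennreal (integral\<^sup>L M q) = (\<integral>\<^sup>+ w. ennreal (q w) \<partial>M)"
      using qi by (subst nn_integral_eq_integral) (auto simp: q_def)
    also have "\<dots> < ennreal \<eta>" using h(2) by (simp add: q_def)
    finally have qint: "integral\<^sup>L M q < \<eta>"
      using eta by (subst (asm) ennreal_less_iff) (auto simp: q_def)
    define R where "R w = 2 powr s * (\<psi> n w + \<delta> powr s + \<delta> powr (s - p) * q w)" for w
    have Ri: "integrable M R" unfolding R_def using \<psi>i qi by simp
    have Rint: "integral\<^sup>L M R = 2 powr s * (integral\<^sup>L M (\<psi> n) + \<delta> powr s + \<delta> powr (s - p) * integral\<^sup>L M q)"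
      unfolding R_def using \<psi>i qi by (simp add: prob_space)
    have "\<delta> powr (s - p) * integral\<^sup>L M q < \<delta> powr (s - p) * \<eta>"
      using qint d by (intro mult_strict_left_mono) auto
    also have "\<delta> powr (s - p) * \<eta> = c" using d by (simp add: \<eta>_def)
    finally have "integral\<^sup>L M R < 2 powr s * (c + c + c)"
      unfolding Rint ds using n by (intro mult_strict_left_mono) auto
    also have "\<dots> = \<epsilon>" by (simp add: c_def)
    finally have Rlt: "integral\<^sup>L M R < \<epsilon>" .
    have pw: "norm (f w - h w) powr s \<le> R w" for w
    proof -
      have "norm (f w - h w) powr s \<le> 2 powr s * (norm (f w - fn n w) powr s + norm (fn n w - h w) powr s)"
        using s by (intro norm_tri_powr) auto
      also have "norm (fn n w - h w) powr s \<le> \<delta> powr s + \<delta> powr (s - p) * q w"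
        unfolding q_def using d s by (intro powr_split) auto
      then have "2 powr s * (norm (f w - fn n w) powr s + norm (fn n w - h w) powr s) \<le> R w"
        unfolding R_def \<psi>_def by (intro mult_left_mono) auto
      finally show ?thesis .
    qed
    have "(\<integral>\<^sup>+ w. ennreal (norm (f w - h w) powr s) \<partial>M) \<le> (\<integral>\<^sup>+ w. ennreal (R w) \<partial>M)"
      using pw by (intro nn_integral_mono) (simp add: ennreal_leI)
    also have "\<dots> = ennreal (integral\<^sup>L M R)"
    proof (rule nn_integral_eq_integral[OF Ri], rule AE_I2)
      fix w have "0 \<le> norm (f w - h w) powr s" by simp
      then show "0 \<le> R w" using pw[of w] by linarith
    qed
    also have "\<dots> < ennreal \<epsilon>" using Rlt e by (intro ennreal_lessI) auto
    finally show ?thesis using h(1) by blast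
  qed
  then show "f \<in> clq M s (dec M A)" using fL s by (simp add: clq_def)
qed

end

theorem mainTheorem13:
  fixes M :: "'w measure" and A :: "('w \<Rightarrow> 'e::{banach,second_countable_topology}) set"
    and X :: "'w \<Rightarrow> 'e set" and s p :: real
  assumes "prob_space M" and "complete_measure M"
    and "1 \<le> s" and "s < p"
    and "A \<noteq> {}" and "A \<subseteq> Lq M p"
    and "closed_random_set M X" and "clq M p (dec M A) = Lq_sel M p X"
  shows "chd M s A = chd M 0 A \<inter> Lq M s
    \<and> chd M 0 A \<inter> Lq M s = Lq_sel M 0 X \<inter> Lq M s
    \<and> Lq_sel M 0 X \<inter> Lq M s = Lq_sel M s X
    \<and> chd M s A \<inter> Lq M p = chd M 0 A \<inter> Lq M p
    \<and> chd M 0 A \<inter> Lq M p = chd M p A"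
proof -
  have p0: "0 < p" using assms by linarith
  interpret T: thm13 M A X p
    using assms p0 by (intro thm13.intro thm13_axioms.intro) auto
  have s0: "0 < s" "s \<le> p" using assms by auto
  have Es: "Lq_sel M s X = clq M s (dec M A)" using T.sels_sub[OF s0] T.clqs_sub[OF s0(1)] by blast
  have E0: "Lq_sel M 0 X = clq M 0 (dec M A)" using T.sel0_sub T.clq0_sub by blast
  have ps: "Lq M p \<subseteq> Lq M s" using T.Lq_mono[OF s0] .
  have s0sub: "Lq M s \<subseteq> Lq M 0" using Lq_meas by (auto simp: Lq_def)
  have Cs: "chd M s A = Lq_sel M s X"
    using chd_eq[OF assms(7) Es] assms(6) ps by blast
  have C0: "chd M 0 A = Lq_sel M 0 X"
    using chd_eq[OF assms(7) E0] assms(6) ps s0sub by blast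
  have Cp: "chd M p A = Lq_sel M p X"
    using chd_eq[OF assms(7) assms(8)[symmetric] assms(6)] .
  have I1: "Lq_sel M 0 X \<inter> Lq M s = Lq_sel M s X" using s0sub by (auto simp: Lq_sel_def)
  have I2: "Lq_sel M s X \<inter> Lq M p = Lq_sel M p X" using ps by (auto simp: Lq_sel_def)
  have I3: "Lq_sel M 0 X \<inter> Lq M p = Lq_sel M p X" using ps s0sub by (auto simp: Lq_sel_def)
  show ?thesis using Cs C0 Cp I1 I2 I3 by simp
qed

end
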